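(* Let $n,d\ge1$, $p>d$, $\Delta\in\mathbb{R}^{nd\times nd}$ symmetric with $d\times d$ blocks, $\Delta_{ii}=0$, $Z^{\top}=[I_d,\dots,I_d]$, $A=ZZ^{\top}+\Delta$, $f(S)=\langle A,SS^{\top}\rangle$. Every second-order critical point $S$ of $f$ satisfies \[ (p-d)\|Z^{\top}S\|_F^2\ge(p-2d)n^2d+\|SS^{\top}\|_F^2\,d+\sum_{i=1}^n\sum_{j=1}^n\big(\|S_iS_j^{\top}\|_F^2-d\big)\mathrm{Tr}(\Delta_{ij})+(p-d)\langle\Delta,ZZ^{\top}-SS^{\top}\rangle. \]
   Context: $S\in\mathbb{R}^{nd\times p}$ has $d\times p$ blocks $S_i$ with $S_iS_i^{\top}=I_d$; $A_{ij}=I_d+\Delta_{ij}$; $\langle X,Y\rangle=\mathrm{Tr}(XY^{\top})$. $\Lambda_{ii}=\frac12\sum_j(S_iS_j^{\top}A_{ji}+A_{ij}S_jS_i^{\top})$; $T_{S_i}=\{Y\in\mathbb{R}^{d\times p}:S_iY^{\top}+YS_i^{\top}=0\}$. $S$ is a second-order critical point if $\sum_jA_{ij}S_j=\Lambda_{ii}S_i$ for all $i$ and $\sum_i\langle\Lambda_{ii},\dot S_i\dot S_i^{\top}\rangle\ge\sum_{i,j}\langle A_{ij},\dot S_i\dot S_j^{\top}\rangle$ for all $\dot S_i\in T_{S_i}$. *)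

theory Defs
  imports "Jordan_Normal_Form.Matrix"
begin

definition mtrace :: "real mat \<Rightarrow> real" where
  "mtrace X = (\<Sum>k<dim_row X. X $$ (k, k))"

definition finner :: "real mat \<Rightarrow> real mat \<Rightarrow> real" where
  "finner X Y = mtrace (X * Y\<^sup>T)"

definition fnorm2 :: "real mat \<Rightarrow> real" where
  "fnorm2 X = finner X X"

definition rblock :: "nat \<Rightarrow> real mat \<Rightarrow> nat \<Rightarrow> real mat" where
  "rblock d S i = mat d (dim_col S) (\<lambda>(r, c). S $$ (i * d + r, c))"

definition dblock :: "nat \<Rightarrow> real mat \<Rightarrow> nat \<Rightarrow> nat \<Rightarrow> real mat" where
  "dblock d M i j = mat d d (\<lambda>(r, c). M $$ (i * d + r, j * d + c))"

text \<open>Z with Z^T = [I_d, ..., I_d]  (n blocks), an (n d) x d matrix.\<close>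
definition Zmat :: "nat \<Rightarrow> nat \<Rightarrow> real mat" where
  "Zmat n d = mat (n * d) d (\<lambda>(r, c). if r mod d = c then 1 else 0)"

definition msum :: "nat \<Rightarrow> nat \<Rightarrow> ('i \<Rightarrow> real mat) \<Rightarrow> 'i set \<Rightarrow> real mat" where
  "msum r c F J = mat r c (\<lambda>(a, b). \<Sum>j\<in>J. F j $$ (a, b))"

text \<open>Blocks of A = Z Z^T + Delta:  A_ij = I_d + Delta_ij.\<close>
definition Ablk :: "nat \<Rightarrow> real mat \<Rightarrow> nat \<Rightarrow> nat \<Rightarrow> real mat" where
  "Ablk d \<Delta> i j = 1\<^sub>m d + dblock d \<Delta> i j"

definition Lam :: "nat \<Rightarrow> nat \<Rightarrow> real mat \<Rightarrow> real mat \<Rightarrow> nat \<Rightarrow> real mat" where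
  "Lam n d \<Delta> S i = (1/2 :: real) \<cdot>\<^sub>m msum d d (\<lambda>j.
      rblock d S i * (rblock d S j)\<^sup>T * Ablk d \<Delta> j i
    + Ablk d \<Delta> i j * rblock d S j * (rblock d S i)\<^sup>T) {..<n}"

definition tangent :: "nat \<Rightarrow> nat \<Rightarrow> real mat \<Rightarrow> real mat set" where
  "tangent d p Si = {Y \<in> carrier_mat d p. Si * Y\<^sup>T + Y * Si\<^sup>T = 0\<^sub>m d d}"

text \<open>Second-order critical point of f(S) = <A, S S^T> over the product of Stiefel manifolds.\<close>
definition second_order_critical :: "nat \<Rightarrow> nat \<Rightarrow> nat \<Rightarrow> real mat \<Rightarrow> real mat \<Rightarrow> bool" where
  "second_order_critical n d p \<Delta> S \<longleftrightarrow>
     (\<forall>i<n. msum d p (\<lambda>j. Ablk d \<Delta> i j * rblock d S j) {..<n}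
              = Lam n d \<Delta> S i * rblock d S i) \<and>
     (\<forall>Sd :: nat \<Rightarrow> real mat. (\<forall>i<n. Sd i \<in> tangent d p (rblock d S i)) \<longrightarrow>
        (\<Sum>i<n. finner (Lam n d \<Delta> S i) (Sd i * (Sd i)\<^sup>T))
          \<ge> (\<Sum>i<n. \<Sum>j<n. finner (Ablk d \<Delta> i j) (Sd i * (Sd j)\<^sup>T)))"

end

theory Submission
  imports Defs
begin

lemma sum_shift_add:
  fixes f :: "nat \<Rightarrow> 'a::comm_monoid_add"
  shows "(\<Sum>a<m+d. f a) = (\<Sum>a<m. f a) + (\<Sum>r<d. f (m+r))"
  by (induction d) (simp_all add: add.assoc)

lemma sum_blocks:
  fixes f :: "nat \<Rightarrow> 'a::comm_monoid_add"
  shows "(\<Sum>a<n*d. f a) = (\<Sum>i<n. \<Sum>r<d. f (i*d+r))"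
proof (induction n)
  case 0 then show ?case by simp
next
  case (Suc n)
  have "(\<Sum>a<Suc n*d. f a) = (\<Sum>a<n*d + d. f a)" by (simp add: add.commute)
  also have "\<dots> = (\<Sum>a<n*d. f a) + (\<Sum>r<d. f (n*d+r))"
    by (rule sum_shift_add)
  finally show ?case using Suc by simp
qed

lemma finner_eq:
  assumes "X \<in> carrier_mat m k" "Y \<in> carrier_mat m k"
  shows "finner X Y = (\<Sum>r<m. \<Sum>c<k. X$$(r,c) * Y$$(r,c))"
  using assms unfolding finner_def mtrace_def
  by (auto simp: scalar_prod_def lessThan_atLeast0 intro!: sum.cong)

lemma fnorm2_eq:
  assumes "X \<in> carrier_mat m k"
  shows "fnorm2 X = (\<Sum>r<m. \<Sum>c<k. (X$$(r,c))^2)"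
  using finner_eq[OF assms assms] unfolding fnorm2_def by (simp add: power2_eq_square)

lemma swap4:
  fixes F :: "nat \<Rightarrow> nat \<Rightarrow> nat \<Rightarrow> nat \<Rightarrow> real"
  shows "(\<Sum>l\<in>L. \<Sum>c\<in>C. \<Sum>r\<in>R. \<Sum>r'\<in>R'. F l c r r') = (\<Sum>r\<in>R. \<Sum>r'\<in>R'. \<Sum>l\<in>L. \<Sum>c\<in>C. F l c r r')"
proof -
  have "(\<Sum>l\<in>L. \<Sum>c\<in>C. \<Sum>r\<in>R. \<Sum>r'\<in>R'. F l c r r') = (\<Sum>l\<in>L. \<Sum>r\<in>R. \<Sum>c\<in>C. \<Sum>r'\<in>R'. F l c r r')"
    by (rule sum.cong[OF refl], rule sum.swap)
  also have "\<dots> = (\<Sum>r\<in>R. \<Sum>l\<in>L. \<Sum>c\<in>C. \<Sum>r'\<in>R'. F l c r r')" by (rule sum.swap)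
  also have "\<dots> = (\<Sum>r\<in>R. \<Sum>l\<in>L. \<Sum>r'\<in>R'. \<Sum>c\<in>C. F l c r r')"
    by (intro sum.cong[OF refl], rule sum.swap)
  also have "\<dots> = (\<Sum>r\<in>R. \<Sum>r'\<in>R'. \<Sum>l\<in>L. \<Sum>c\<in>C. F l c r r')"
    by (rule sum.cong[OF refl], rule sum.swap)
  finally show ?thesis .
qed

lemma Gsum:
  fixes x y :: "nat \<Rightarrow> nat \<Rightarrow> real"
  assumes ox: "\<And>r r'. r<d \<Longrightarrow> r'<d \<Longrightarrow> (\<Sum>c<p. x r c * x r' c) = (if r=r' then 1 else 0)"
  and oy: "\<And>r r'. r<d \<Longrightarrow> r'<d \<Longrightarrow> (\<Sum>c<p. y r c * y r' c) = (if r=r' then 1 else 0)"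
  shows "(\<Sum>l<p. \<Sum>c<p. ((if l=c then 1 else 0) - (\<Sum>r<d. x r l * x r c))
             * ((if l=c then 1 else 0) - (\<Sum>r<d. y r l * y r c)))
         = real p - 2*real d + (\<Sum>r<d. \<Sum>r'<d. (\<Sum>c<p. x r c * y r' c)^2)"
proof -
  define Tx where "Tx l c = (\<Sum>r<d. x r l * x r c)" for l c
  define Ty where "Ty l c = (\<Sum>r<d. y r l * y r c)" for l c
  have e: "((if l=c then 1 else 0) - Tx l c) * ((if l=c then 1 else 0) - Ty l c)
     = (if l=c then 1 else 0) - (if l=c then Ty l c else 0) - (if l = c then Tx l c else 0) + Tx l c * Ty l c"
    for l c :: nat by (simp add: algebra_simps)
  have s1: "(\<Sum>l<p. \<Sum>c<p. (if l=c then 1 else 0::real)) = real p" by simp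
  have s2: "(\<Sum>l<p. \<Sum>c<p. (if l=c then Ty l c else 0)) = real d"
  proof -
    have "(\<Sum>l<p. \<Sum>c<p. (if l=c then Ty l c else 0)) = (\<Sum>l<p. Ty l l)" by simp
    also have "\<dots> = (\<Sum>r<d. \<Sum>l<p. y r l * y r l)" unfolding Ty_def by (rule sum.swap)
    also have "\<dots> = (\<Sum>r<d. 1)" using oy by simp
    finally show ?thesis by simp
  qed
  have s3: "(\<Sum>l<p. \<Sum>c<p. (if l=c then Tx l c else 0)) = real d"
  proof -
    have "(\<Sum>l<p. \<Sum>c<p. (if l=c then Tx l c else 0)) = (\<Sum>l<p. Tx l l)" by simp
    also have "\<dots> = (\<Sum>r<d. \<Sum>l<p. x r l * x r l)" unfolding Tx_def by (rule sum.swap)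
    also have "\<dots> = (\<Sum>r<d. 1)" using ox by simp
    finally show ?thesis by simp
  qed
  have s4: "(\<Sum>l<p. \<Sum>c<p. Tx l c * Ty l c) = (\<Sum>r<d. \<Sum>r'<d. (\<Sum>c<p. x r c * y r' c)^2)"
  proof -
    have "(\<Sum>l<p. \<Sum>c<p. Tx l c * Ty l c) = (\<Sum>l<p. \<Sum>c<p. \<Sum>r<d. \<Sum>r'<d. x r l * x r c * (y r' l * y r' c))"
      unfolding Tx_def Ty_def by (simp add: sum_product)
    also have "\<dots> = (\<Sum>r<d. \<Sum>r'<d. \<Sum>l<p. \<Sum>c<p. x r l * x r c * (y r' l * y r' c))"
      by (rule swap4)
    also have "\<dots> = (\<Sum>r<d. \<Sum>r'<d. (\<Sum>c<p. x r c * y r' c)^2)"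
      by (simp add: power2_eq_square sum_product algebra_simps)
    finally show ?thesis .
  qed
  show ?thesis
    unfolding Tx_def[symmetric] Ty_def[symmetric] e
    using s2 s3 by (simp add: sum.distrib sum_subtractf s1 s4)
qed

lemma times_delta: "(x::real) * (if P then 1 else 0) = (if P then x else 0)" by simp

lemma mult_entry:
  assumes "A \<in> carrier_mat a b" "B \<in> carrier_mat b c" "i < a" "j < c"
  shows "(A*B)$$(i,j) = (\<Sum>m<b. A$$(i,m)*B$$(m,j))"
  using assms by (auto simp: scalar_prod_def lessThan_atLeast0 intro!: sum.cong)

lemma blk_lt: "i < n \<Longrightarrow> r < d \<Longrightarrow> i*d + r < n*(d::nat)"
proof -
  assume "i < n" "r < d"
  then have "i*d + r < i*d + d" by simp
  also have "\<dots> = Suc i * d" by simp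
  also have "\<dots> \<le> n*d" using \<open>i<n\<close> by (intro mult_le_mono1) simp
  finally show ?thesis .
qed

lemma rblock_carrier: "rblock d S i \<in> carrier_mat d (dim_col S)"
  unfolding rblock_def by simp

lemma rblock_index: "r < d \<Longrightarrow> c < dim_col S \<Longrightarrow> rblock d S i $$ (r,c) = S$$(i*d+r,c)"
  unfolding rblock_def by simp

lemma dblock_carrier: "dblock d M i j \<in> carrier_mat d d"
  unfolding dblock_def by simp

lemma dblock_index: "r < d \<Longrightarrow> c < d \<Longrightarrow> dblock d M i j $$ (r,c) = M$$(i*d+r,j*d+c)"
  unfolding dblock_def by simp

lemma Ablk_carrier: "Ablk d M i j \<in> carrier_mat d d"
  unfolding Ablk_def dblock_def by simp

lemma Ablk_index: "r < d \<Longrightarrow> c < d \<Longrightarrow> Ablk d M i j $$ (r,c) = (if r = c then 1 else 0) + M$$(i*d+r,j*d+c)"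
  unfolding Ablk_def dblock_def by simp

lemma mtrace_eq: "X \<in> carrier_mat m m \<Longrightarrow> mtrace X = (\<Sum>k<m. X$$(k,k))"
  unfolding mtrace_def by simp

definition SdM :: "nat \<Rightarrow> nat \<Rightarrow> (nat \<Rightarrow> nat \<Rightarrow> nat \<Rightarrow> real) \<Rightarrow> nat \<Rightarrow> nat \<Rightarrow> nat \<Rightarrow> real mat" where
  "SdM d p q k l i = mat d p (\<lambda>(r,c). if r = k then q i l c else 0)"

lemma SdM_carrier: "SdM d p q k l i \<in> carrier_mat d p"
  unfolding SdM_def by simp

lemma SdM_prod:
  assumes "r < d" "r' < d"
  shows "(SdM d p q k l i * (SdM d p q k l j)\<^sup>T)$$(r,r')
     = (if r = k \<and> r' = k then (\<Sum>c<p. q i l c * q j l c) else 0)"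
  using assms unfolding SdM_def
  by (subst mult_entry[where b=p]) auto

lemma finner_SdM:
  assumes "X \<in> carrier_mat d d" "k < d"
  shows "finner X (SdM d p q k l i * (SdM d p q k l j)\<^sup>T) = X$$(k,k) * (\<Sum>c<p. q i l c * q j l c)"
proof -
  have "finner X (SdM d p q k l i * (SdM d p q k l j)\<^sup>T)
     = (\<Sum>r<d. \<Sum>r'<d. X$$(r,r') * (if r = k \<and> r' = k then (\<Sum>c<p. q i l c * q j l c) else 0))"
    using assms SdM_carrier[of d p q k l i] SdM_carrier[of d p q k l j]
    apply (subst finner_eq[where m=d and k=d])
      apply (auto)[2]
    apply (intro sum.cong refl)
    apply (simp only: SdM_prod lessThan_iff)
    done
  also have "\<dots> = X$$(k,k) * (\<Sum>c<p. q i l c * q j l c)"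
  proof -
    have e: "(if r = k \<and> r' = k then v else 0) = (if r' = k then (if r = k then v else 0) else (0::real))" for r r' v
      by simp
    show ?thesis using assms(2) by (simp add: if_distrib[of "\<lambda>x. _ * x"] e cong: if_cong)
  qed
  finally show ?thesis .
qed

theorem lemma6:
  fixes n d p :: nat and \<Delta> S :: "real mat"
  assumes "n \<ge> 1" and "d \<ge> 1" and "p > d"
    and "\<Delta> \<in> carrier_mat (n * d) (n * d)" and "\<Delta>\<^sup>T = \<Delta>"
    and "\<forall>i<n. dblock d \<Delta> i i = 0\<^sub>m d d"
    and "S \<in> carrier_mat (n * d) p"
    and "\<forall>i<n. rblock d S i * (rblock d S i)\<^sup>T = 1\<^sub>m d"
    and "second_order_critical n d p \<Delta> S"
  shows "real (p - d) * fnorm2 ((Zmat n d)\<^sup>T * S)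
     \<ge> (real p - 2 * real d) * real n ^ 2 * real d
       + fnorm2 (S * S\<^sup>T) * real d
       + (\<Sum>i<n. \<Sum>j<n. (fnorm2 (rblock d S i * (rblock d S j)\<^sup>T) - real d)
                          * mtrace (dblock d \<Delta> i j))
       + real (p - d) * finner \<Delta> (Zmat n d * (Zmat n d)\<^sup>T - S * S\<^sup>T)"
proof -
  have Sc: "S \<in> carrier_mat (n*d) p" and Dc: "\<Delta> \<in> carrier_mat (n*d) (n*d)" using assms by auto
  have dcS: "dim_col S = p" "dim_row S = n*d" using Sc by auto
  have dcD: "dim_col \<Delta> = n*d" "dim_row \<Delta> = n*d" using Dc by auto
  have rbc: "rblock d S i \<in> carrier_mat d p" for i using rblock_carrier[of d S i] dcS by simp
  define s where "s i r c = S$$(i*d+r,c)" for i r c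
  define dl where "dl i j r r' = \<Delta>$$(i*d+r, j*d+r')" for i j r r'
  define b where "b i j r r' = (\<Sum>c<p. s i r c * s j r' c)" for i j r r'
  define N where "N i j = (\<Sum>r<d. \<Sum>r'<d. (b i j r r')^2)" for i j
  define tD where "tD i j = (\<Sum>r<d. dl i j r r)" for i j
  define q where "q i l c = (if l = c then 1 else 0) - (\<Sum>r<d. s i r l * s i r c)" for i l c
  define g where "g i j l = (\<Sum>c<p. q i l c * q j l c)" for i j l
  have rbi: "r < d \<Longrightarrow> c < p \<Longrightarrow> rblock d S i $$ (r,c) = s i r c" for i r c
    using rblock_index[of r d c S i] dcS s_def by simp
  have orth: "(\<Sum>c<p. s i r c * s i r' c) = (if r=r' then 1 else 0)"
    if "i<n" "r<d" "r'<d" for i r r'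
  proof -
    have "(rblock d S i * (rblock d S i)\<^sup>T)$$(r,r') = (1\<^sub>m d :: real mat)$$(r,r')"
      using assms(8) that by simp
    moreover have "(rblock d S i * (rblock d S i)\<^sup>T)$$(r,r') = (\<Sum>c<p. s i r c * s i r' c)"
      using that rbc[of i] by (subst mult_entry[where b=p]) (auto simp: rbi)
    ultimately show ?thesis using that by simp
  qed
  have symD: "dl j i r' r = dl i j r r'" if "i<n" "j<n" "r<d" "r'<d" for i j r r'
  proof -
    have "\<Delta>$$(j*d+r', i*d+r) = \<Delta>\<^sup>T$$(i*d+r, j*d+r')"
      using that blk_lt dcD by simp
    then show ?thesis unfolding dl_def using assms(5) by simp
  qed
  have key0: "(\<Sum>c<p. s i r c * q i l c) = 0" if "i<n" "r<d" "l<p" for i r l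
  proof -
    have "(\<Sum>c<p. s i r c * q i l c) = (\<Sum>c<p. (if l = c then s i r c else 0)) - (\<Sum>c<p. \<Sum>r''<d. s i r'' l * (s i r c * s i r'' c))"
    proof -
      have "s i r c * (if l=c then 1 else 0) = (if l = c then s i r c else 0)" for c by simp
      then show ?thesis unfolding q_def by (simp add: algebra_simps sum_subtractf sum_distrib_left)
    qed
    also have "(\<Sum>c<p. \<Sum>r''<d. s i r'' l * (s i r c * s i r'' c)) = (\<Sum>r''<d. s i r'' l * (\<Sum>c<p. s i r c * s i r'' c))"
      by (subst sum.swap) (simp add: sum_distrib_left)
    also have "\<dots> = (\<Sum>r''<d. s i r'' l * (if r = r'' then 1 else 0))"
      using orth that by simp
    finally show ?thesis using that by (simp add: times_delta)
  qed
  have tang: "SdM d p q k l i \<in> tangent d p (rblock d S i)" if "k<d" "l<p" "i<n" for k l i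
    unfolding tangent_def
  proof (intro CollectI conjI SdM_carrier eq_matI)
    fix r r' assume rr: "r < dim_row (0\<^sub>m d d :: real mat)" "r' < dim_col (0\<^sub>m d d :: real mat)"
    have sc: "(SdM d p q k l i)\<^sup>T \<in> carrier_mat p d" using SdM_carrier by auto
    have rc: "(rblock d S i)\<^sup>T \<in> carrier_mat p d" using rbc by auto
    have e1: "(rblock d S i * (SdM d p q k l i)\<^sup>T) $$ (r,r') = (\<Sum>c<p. s i r c * (if r' = k then q i l c else 0))"
      using rr rbc sc by (subst mult_entry[where b=p]) (auto simp: rbi SdM_def intro!: sum.cong)
    have e2: "(SdM d p q k l i * (rblock d S i)\<^sup>T) $$ (r,r') = (\<Sum>c<p. s i r' c * (if r = k then q i l c else 0))"
      using rr rc by (subst mult_entry[where b=p]) (auto simp: rbi SdM_def intro!: sum.cong)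
    have z1: "(\<Sum>c<p. s i r c * (if r' = k then q i l c else 0)) = 0"
      using key0[of i r l] that rr by (cases "r' = k") auto
    have z2: "(\<Sum>c<p. s i r' c * (if r = k then q i l c else 0)) = 0"
      using key0[of i r' l] that rr by (cases "r = k") auto
    show "(rblock d S i * (SdM d p q k l i)\<^sup>T + SdM d p q k l i * (rblock d S i)\<^sup>T) $$ (r, r') = 0\<^sub>m d d $$ (r, r')"
    proof -
      have "(rblock d S i * (SdM d p q k l i)\<^sup>T + SdM d p q k l i * (rblock d S i)\<^sup>T) $$ (r, r')
         = (rblock d S i * (SdM d p q k l i)\<^sup>T) $$ (r,r') + (SdM d p q k l i * (rblock d S i)\<^sup>T) $$ (r, r')"
        using rr rbc[of i] sc rc SdM_carrier[of d p q k l i] by (intro index_add_mat) auto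
      then show ?thesis using rr by (simp only: e1 e2 z1 z2) simp
    qed
  qed (use rbc[of i] SdM_carrier[of d p q k l i] in auto)
  have Lamc: "Lam n d \<Delta> S i \<in> carrier_mat d d" for i unfolding Lam_def msum_def by simp
  have ineq: "(\<Sum>i<n. Lam n d \<Delta> S i $$ (k,k) * g i i l) \<ge> (\<Sum>i<n. \<Sum>j<n. Ablk d \<Delta> i j $$(k,k) * g i j l)"
    if "k<d" "l<p" for k l
  proof -
    have "(\<Sum>i<n. finner (Lam n d \<Delta> S i) (SdM d p q k l i * (SdM d p q k l i)\<^sup>T))
          \<ge> (\<Sum>i<n. \<Sum>j<n. finner (Ablk d \<Delta> i j) (SdM d p q k l i * (SdM d p q k l j)\<^sup>T))"
      using assms(9) tang that unfolding second_order_critical_def by blast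
    then show ?thesis using that by (simp add: finner_SdM Lamc Ablk_carrier g_def)
  qed
  have sumineq: "(\<Sum>k<d. \<Sum>l<p. \<Sum>i<n. Lam n d \<Delta> S i $$ (k,k) * g i i l)
      \<ge> (\<Sum>k<d. \<Sum>l<p. \<Sum>i<n. \<Sum>j<n. Ablk d \<Delta> i j $$(k,k) * g i j l)"
    by (rule sum_mono, rule sum_mono, rule ineq) auto
  have Gij: "(\<Sum>l<p. g i j l) = real p - 2*real d + N i j" if "i<n" "j<n" for i j
    unfolding g_def q_def N_def b_def
    by (rule Gsum) (use orth that in auto)
  have Nii: "N i i = real d" if "i<n" for i
  proof -
    have "N i i = (\<Sum>r<d. \<Sum>r'<d. (if r = r' then 1 else 0))"
      unfolding N_def b_def using orth that by (intro sum.cong refl) simp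
    then show ?thesis by simp
  qed
  have Gii: "(\<Sum>l<p. g i i l) = real p - real d" if "i<n" for i
    using Gij[of i i] Nii[of i] that by simp
  have bb: "(rblock d S i * (rblock d S j)\<^sup>T)$$(r,r') = b i j r r'" if "r<d" "r'<d" for i j r r'
    using that rbc[of i] rbc[of j] unfolding b_def
    by (subst mult_entry[where b=p]) (auto simp: rbi intro!: sum.cong)
  have Aij: "Ablk d \<Delta> i j $$ (r,r') = (if r = r' then 1 else 0) + dl i j r r'" if "r<d" "r'<d" for i j r r'
    using that Ablk_index dl_def by simp
  have LamK: "Lam n d \<Delta> S i $$ (k,k) = (\<Sum>j<n. \<Sum>m<d. ((if k = m then 1 else 0) + dl i j k m) * b i j k m)"
    if "i<n" "k<d" for i k
  proof -
    have Fj: "(rblock d S i * (rblock d S j)\<^sup>T * Ablk d \<Delta> j i + Ablk d \<Delta> i j * rblock d S j * (rblock d S i)\<^sup>T) $$ (k,k)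
       = 2 * (\<Sum>m<d. ((if k = m then 1 else 0) + dl i j k m) * b i j k m)" if "j<n" for j
    proof -
      have c1: "rblock d S i * (rblock d S j)\<^sup>T \<in> carrier_mat d d" using rbc[of i] rbc[of j] by auto
      have c2: "rblock d S j * (rblock d S i)\<^sup>T \<in> carrier_mat d d" using rbc[of i] rbc[of j] by auto
      have as: "Ablk d \<Delta> i j * rblock d S j * (rblock d S i)\<^sup>T = Ablk d \<Delta> i j * (rblock d S j * (rblock d S i)\<^sup>T)"
        using rbc[of i] rbc[of j] Ablk_carrier[of d \<Delta> i j] by (intro assoc_mult_mat) auto
      have e1: "(rblock d S i * (rblock d S j)\<^sup>T * Ablk d \<Delta> j i)$$(k,k)
          = (\<Sum>m<d. ((if k = m then 1 else 0) + dl i j k m) * b i j k m)"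
        apply (subst mult_entry[where b=d, OF c1 Ablk_carrier \<open>k<d\<close> \<open>k<d\<close>])
        using \<open>i<n\<close> \<open>j<n\<close> \<open>k<d\<close> by (auto simp: bb Aij symD intro!: sum.cong)
      have e2: "(Ablk d \<Delta> i j * (rblock d S j * (rblock d S i)\<^sup>T))$$(k,k)
          = (\<Sum>m<d. ((if k = m then 1 else 0) + dl i j k m) * b i j k m)"
        apply (subst mult_entry[where b=d, OF Ablk_carrier c2 \<open>k<d\<close> \<open>k<d\<close>])
        using \<open>i<n\<close> \<open>j<n\<close> \<open>k<d\<close> by (auto simp: bb Aij b_def mult.commute intro!: sum.cong)
      have "(rblock d S i * (rblock d S j)\<^sup>T * Ablk d \<Delta> j i + Ablk d \<Delta> i j * rblock d S j * (rblock d S i)\<^sup>T) $$ (k,k)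
         = (rblock d S i * (rblock d S j)\<^sup>T * Ablk d \<Delta> j i)$$(k,k) + (Ablk d \<Delta> i j * (rblock d S j * (rblock d S i)\<^sup>T))$$(k,k)"
        unfolding as using c1 c2 Ablk_carrier[of d \<Delta> i j] Ablk_carrier[of d \<Delta> j i] \<open>k<d\<close>
        by (intro index_add_mat) auto
      then show ?thesis using e1 e2 by simp
    qed
    have "Lam n d \<Delta> S i $$ (k,k) = 1/2 * (\<Sum>j<n. (rblock d S i * (rblock d S j)\<^sup>T * Ablk d \<Delta> j i + Ablk d \<Delta> i j * rblock d S j * (rblock d S i)\<^sup>T) $$ (k,k))"
      unfolding Lam_def msum_def using \<open>k<d\<close> by simp
    also have "\<dots> = (\<Sum>j<n. \<Sum>m<d. ((if k = m then 1 else 0) + dl i j k m) * b i j k m)"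
      by (simp add: Fj sum_distrib_left)
    finally show ?thesis .
  qed
  define AB where "AB = (\<Sum>i<n. \<Sum>j<n. \<Sum>k<d. \<Sum>m<d. ((if k = m then 1 else 0) + dl i j k m) * b i j k m)"
  have L: "(\<Sum>k<d. \<Sum>l<p. \<Sum>i<n. Lam n d \<Delta> S i $$ (k,k) * g i i l) = (real p - real d) * AB"
  proof -
    have "(\<Sum>k<d. \<Sum>l<p. \<Sum>i<n. Lam n d \<Delta> S i $$ (k,k) * g i i l)
        = (\<Sum>k<d. \<Sum>i<n. \<Sum>l<p. Lam n d \<Delta> S i $$ (k,k) * g i i l)"
      by (rule sum.cong[OF refl], rule sum.swap)
    also have "\<dots> = (\<Sum>i<n. \<Sum>k<d. \<Sum>l<p. Lam n d \<Delta> S i $$ (k,k) * g i i l)" by (rule sum.swap)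
    also have "\<dots> = (\<Sum>i<n. (\<Sum>k<d. Lam n d \<Delta> S i $$ (k,k)) * (\<Sum>l<p. g i i l))"
      by (simp add: sum_product)
    also have "\<dots> = (\<Sum>i<n. (\<Sum>k<d. \<Sum>j<n. \<Sum>m<d. ((if k = m then 1 else 0) + dl i j k m) * b i j k m) * (real p - real d))"
      by (intro sum.cong refl) (simp add: Gii LamK)
    also have "\<dots> = (real p - real d) * AB"
      unfolding AB_def by (simp add: sum_distrib_left sum_distrib_right mult.commute sum.swap[of _ "{..<d}" "{..<n}"])
    finally show ?thesis .
  qed
  have R: "(\<Sum>k<d. \<Sum>l<p. \<Sum>i<n. \<Sum>j<n. Ablk d \<Delta> i j $$(k,k) * g i j l)
     = (\<Sum>i<n. \<Sum>j<n. (real d + tD i j) * (real p - 2*real d + N i j))"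
  proof -
    have "(\<Sum>k<d. \<Sum>l<p. \<Sum>i<n. \<Sum>j<n. Ablk d \<Delta> i j $$(k,k) * g i j l)
        = (\<Sum>i<n. \<Sum>j<n. \<Sum>k<d. \<Sum>l<p. Ablk d \<Delta> i j $$(k,k) * g i j l)" by (rule swap4)
    also have "\<dots> = (\<Sum>i<n. \<Sum>j<n. (\<Sum>k<d. Ablk d \<Delta> i j $$(k,k)) * (\<Sum>l<p. g i j l))"
      by (simp add: sum_product)
    also have "\<dots> = (\<Sum>i<n. \<Sum>j<n. (real d + tD i j) * (real p - 2*real d + N i j))"
      by (intro sum.cong refl) (simp add: Gij Aij tD_def sum.distrib)
    finally show ?thesis .
  qed
  have H: "(real p - real d) * AB \<ge> (\<Sum>i<n. \<Sum>j<n. (real d + tD i j) * (real p - 2*real d + N i j))"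
    using sumineq L R by simp
  have Zc: "Zmat n d \<in> carrier_mat (n*d) d" unfolding Zmat_def by simp
  have Zi: "Zmat n d $$ (i*d+r, m) = (if r = m then 1 else 0)" if "i<n" "r<d" "m<d" for i r m
    using that blk_lt[of i n r d] unfolding Zmat_def by simp
  have fZS: "fnorm2 ((Zmat n d)\<^sup>T * S) = (\<Sum>r<d. \<Sum>c<p. (\<Sum>i<n. s i r c)^2)"
  proof -
    have c: "(Zmat n d)\<^sup>T * S \<in> carrier_mat d p" using Zc Sc by auto
    have e: "((Zmat n d)\<^sup>T * S) $$ (r,c) = (\<Sum>i<n. s i r c)" if "r<d" "c<p" for r c
    proof -
      have "((Zmat n d)\<^sup>T * S) $$ (r,c) = (\<Sum>a<n*d. (Zmat n d)\<^sup>T $$ (r,a) * S $$ (a,c))"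
        using Zc Sc that by (intro mult_entry) auto
      also have "\<dots> = (\<Sum>i<n. \<Sum>r''<d. (Zmat n d)\<^sup>T $$ (r,i*d+r'') * S $$ (i*d+r'',c))"
        by (rule sum_blocks)
      also have "\<dots> = (\<Sum>i<n. \<Sum>r''<d. (if r'' = r then s i r'' c else 0))"
        using that Zc blk_lt by (intro sum.cong refl) (auto simp: Zi s_def)
      finally show ?thesis using that by simp
    qed
    show ?thesis using c by (simp add: fnorm2_eq[OF c] e)
  qed
  have SSe: "(S * S\<^sup>T) $$ (i*d+r, j*d+r') = b i j r r'" if "i<n" "j<n" "r<d" "r'<d" for i j r r'
    using that Sc blk_lt[of i n r d] blk_lt[of j n r' d] unfolding b_def s_def
    by (subst mult_entry[where b=p]) auto
  have ZZe: "(Zmat n d * (Zmat n d)\<^sup>T) $$ (i*d+r, j*d+r') = (if r = r' then 1 else 0)" if "i<n" "j<n" "r<d" "r'<d" for i j r r'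
  proof -
    have "(Zmat n d * (Zmat n d)\<^sup>T) $$ (i*d+r, j*d+r') = (\<Sum>m<d. Zmat n d $$ (i*d+r, m) * Zmat n d $$ (j*d+r', m))"
      using that Zc blk_lt[of i n r d] blk_lt[of j n r' d] by (subst mult_entry[where b=d]) auto
    also have "\<dots> = (\<Sum>m<d. (if r' = m then (if r = m then 1 else 0) else 0))"
      using that by (intro sum.cong refl) (simp add: Zi)
    finally show ?thesis using that by simp
  qed
  have fSS: "fnorm2 (S * S\<^sup>T) = (\<Sum>i<n. \<Sum>j<n. N i j)"
  proof -
    have c: "S * S\<^sup>T \<in> carrier_mat (n*d) (n*d)" using Sc by auto
    have "fnorm2 (S * S\<^sup>T) = (\<Sum>i<n. \<Sum>r<d. \<Sum>j<n. \<Sum>r'<d. ((S * S\<^sup>T) $$ (i*d+r, j*d+r'))^2)"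
      by (simp add: fnorm2_eq[OF c] sum_blocks)
    also have "\<dots> = (\<Sum>i<n. \<Sum>r<d. \<Sum>j<n. \<Sum>r'<d. (b i j r r')^2)"
      by (intro sum.cong refl) (simp add: SSe)
    also have "\<dots> = (\<Sum>i<n. \<Sum>j<n. N i j)" unfolding N_def
      by (rule sum.cong[OF refl], rule sum.swap)
    finally show ?thesis .
  qed
  have fblk: "fnorm2 (rblock d S i * (rblock d S j)\<^sup>T) = N i j" for i j
  proof -
    have c: "rblock d S i * (rblock d S j)\<^sup>T \<in> carrier_mat d d" using rbc[of i] rbc[of j] by auto
    show ?thesis by (simp add: fnorm2_eq[OF c] bb N_def)
  qed
  have trD: "mtrace (dblock d \<Delta> i j) = tD i j" for i j
    by (simp add: mtrace_eq[OF dblock_carrier] dblock_index tD_def dl_def)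
  define Db where "Db = (\<Sum>i<n. \<Sum>j<n. \<Sum>r<d. \<Sum>r'<d. dl i j r r' * b i j r r')"
  have fD: "finner \<Delta> (Zmat n d * (Zmat n d)\<^sup>T - S * S\<^sup>T) = (\<Sum>i<n. \<Sum>j<n. tD i j) - Db"
  proof -
    have c: "Zmat n d * (Zmat n d)\<^sup>T - S * S\<^sup>T \<in> carrier_mat (n*d) (n*d)" using Sc Zc by auto
    have "finner \<Delta> (Zmat n d * (Zmat n d)\<^sup>T - S * S\<^sup>T)
       = (\<Sum>i<n. \<Sum>r<d. \<Sum>j<n. \<Sum>r'<d. \<Delta> $$ (i*d+r, j*d+r') * (Zmat n d * (Zmat n d)\<^sup>T - S * S\<^sup>T) $$ (i*d+r, j*d+r'))"
      by (simp add: finner_eq[OF Dc c] sum_blocks)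
    also have "\<dots> = (\<Sum>i<n. \<Sum>r<d. \<Sum>j<n. \<Sum>r'<d. dl i j r r' * ((if r = r' then 1 else 0) - b i j r r'))"
    proof (intro sum.cong refl)
      fix i r j r' assume "i \<in> {..<n}" "r \<in> {..<d}" "j \<in> {..<n}" "r' \<in> {..<d}"
      then have h: "i<n" "r<d" "j<n" "r'<d" by auto
      have "(Zmat n d * (Zmat n d)\<^sup>T - S * S\<^sup>T) $$ (i*d+r, j*d+r')
          = (Zmat n d * (Zmat n d)\<^sup>T) $$ (i*d+r, j*d+r') - (S * S\<^sup>T) $$ (i*d+r, j*d+r')"
        using Sc Zc blk_lt[of i n r d] blk_lt[of j n r' d] h by (intro index_minus_mat) auto
      then show "\<Delta> $$ (i*d+r, j*d+r') * (Zmat n d * (Zmat n d)\<^sup>T - S * S\<^sup>T) $$ (i*d+r, j*d+r')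
          = dl i j r r' * ((if r = r' then 1 else 0) - b i j r r')"
        using h by (simp only: ZZe SSe dl_def)
    qed
    also have "\<dots> = (\<Sum>i<n. \<Sum>j<n. \<Sum>r<d. \<Sum>r'<d. dl i j r r' * ((if r = r' then 1 else 0) - b i j r r'))"
      by (rule sum.cong[OF refl], rule sum.swap)
    also have "\<dots> = (\<Sum>i<n. \<Sum>j<n. tD i j) - Db"
      unfolding Db_def tD_def by (simp add: algebra_simps sum_subtractf times_delta)
    finally show ?thesis .
  qed
  define Z0 where "Z0 = (\<Sum>r<d. \<Sum>c<p. (\<Sum>i<n. s i r c)^2)"
  have ABe: "AB = Z0 + Db"
  proof -
    have "AB = (\<Sum>i<n. \<Sum>j<n. \<Sum>k<d. b i j k k) + Db"
      unfolding AB_def Db_def by (simp add: algebra_simps sum.distrib times_delta)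
    also have "(\<Sum>i<n. \<Sum>j<n. \<Sum>k<d. b i j k k) = (\<Sum>i<n. \<Sum>j<n. \<Sum>k<d. \<Sum>c<p. s i k c * s j k c)"
      unfolding b_def by simp
    also have "\<dots> = (\<Sum>k<d. \<Sum>c<p. \<Sum>i<n. \<Sum>j<n. s i k c * s j k c)" by (rule swap4)
    also have "\<dots> = Z0" unfolding Z0_def by (simp add: power2_eq_square sum_product)
    finally show ?thesis .
  qed
  have expand: "(\<Sum>i<n. \<Sum>j<n. (real d + tD i j) * (real p - 2*real d + N i j))
     = real n ^ 2 * real d * (real p - 2*real d) + real d * (\<Sum>i<n. \<Sum>j<n. N i j)
       + (real p - 2*real d) * (\<Sum>i<n. \<Sum>j<n. tD i j) + (\<Sum>i<n. \<Sum>j<n. tD i j * N i j)"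
  proof -
    define P where "P = real p - 2*real d"
    have "(\<Sum>i<n. \<Sum>j<n. (real d + tD i j) * (P + N i j))
       = (\<Sum>i<n. \<Sum>j<n. real d * P + real d * N i j + P * tD i j + tD i j * N i j)"
      by (intro sum.cong refl) (simp add: algebra_simps)
    also have "\<dots> = (\<Sum>i<n. \<Sum>j<n. real d * P) + (\<Sum>i<n. \<Sum>j<n. real d * N i j)
        + (\<Sum>i<n. \<Sum>j<n. P * tD i j) + (\<Sum>i<n. \<Sum>j<n. tD i j * N i j)"
      by (simp add: sum.distrib)
    also have "\<dots> = real n ^ 2 * real d * P + real d * (\<Sum>i<n. \<Sum>j<n. N i j)
       + P * (\<Sum>i<n. \<Sum>j<n. tD i j) + (\<Sum>i<n. \<Sum>j<n. tD i j * N i j)"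
      by (simp add: sum_distrib_left power2_eq_square)
    finally show ?thesis unfolding P_def .
  qed
  have expand2: "(\<Sum>i<n. \<Sum>j<n. (N i j - real d) * tD i j)
     = (\<Sum>i<n. \<Sum>j<n. tD i j * N i j) - real d * (\<Sum>i<n. \<Sum>j<n. tD i j)"
    by (simp add: algebra_simps sum_subtractf sum_distrib_left)
  have pd: "real (p - d) = real p - real d" using assms(3) by simp
  show ?thesis
    unfolding fZS fSS fblk trD fD pd expand2 Z0_def[symmetric]
    using H unfolding expand ABe by (simp add: algebra_simps)
qed

end
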